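(* Let $K$ be a field of characteristic zero, and suppose $F\in K[X]$ has the property that $u\circ F\circ v$ has at least two monomial terms whenever $u,v\in K[X]$ are of degree one. Then the equation $F\circ b=a\circ F$ has only finitely many solutions in degree-one polynomials $a,b\in K[X]$.
   Context: $\circ$ denotes composition of polynomials. *)

theory Defs
  imports "HOL-Computational_Algebra.Polynomial"
begin

definition num_terms :: "'a::zero poly \<Rightarrow> nat" where
  "num_terms p = card {i. coeff p i \<noteq> 0}"

end

theory Submission
  imports Defs
begin

lemma pcomp_sum: "pcompose p q = (\<Sum>i\<le>degree p. smult (coeff p i) (q^i))"
  for p q :: "'a::comm_ring_1 poly"
  unfolding pcompose_altdef poly_altdef
  by (simp add: degree_map_poly coeff_map_poly)

lemma deg_lin_pow: "degree ([:h0,h1:]^i) \<le> i"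
  for h0 h1 :: "'a::comm_ring_1"
proof -
  have "degree ([:h0,h1:]^i) \<le> degree [:h0,h1:] * i" by (rule degree_power_le)
  also have "\<dots> \<le> i" by (cases "h1 = 0") auto
  finally show ?thesis .
qed

lemma coeff_top1:
  fixes p :: "'a::comm_ring_1 poly"
  assumes "degree p = n" "n \<ge> 1"
  shows "coeff (pcompose p [:h0,h1:]) (n-1) = coeff p (n-1) * h1^(n-1) + of_nat n * coeff p n * h1^(n-1) * h0"
proof -
  let ?q = "[:h0,h1:]"
  have "coeff (pcompose p ?q) (n-1) = (\<Sum>i\<le>n. coeff p i * coeff (?q^i) (n-1))"
    by (simp add: pcomp_sum coeff_sum assms)
  also have "\<dots> = (\<Sum>i\<in>{n-1,n}. coeff p i * coeff (?q^i) (n-1))"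
  proof (rule sum.mono_neutral_right)
    show "\<forall>i\<in>{..n} - {n - 1, n}. coeff p i * coeff (?q ^ i) (n - 1) = 0"
    proof
      fix i assume "i \<in> {..n} - {n - 1, n}"
      hence "i < n - 1" by auto
      moreover have "degree (?q^i) \<le> i" by (rule deg_lin_pow)
      ultimately show "coeff p i * coeff (?q ^ i) (n - 1) = 0" by (simp add: coeff_eq_0)
    qed
  qed (use assms in auto)
  also have "\<dots> = coeff p (n-1) * coeff (?q^(n-1)) (n-1) + coeff p n * coeff (?q^n) (n-1)"
    using assms by simp
  also have "\<dots> = coeff p (n-1) * h1^(n-1) + of_nat n * coeff p n * h1^(n-1) * h0"
  proof -
    have "n choose (n-1) = n" using binomial_symmetric[of 1 n] assms by simp
    thus ?thesis using assms by (simp add: coeff_linear_poly_power mult_ac)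
  qed
  finally show ?thesis .
qed

lemma num_terms_monom: "num_terms (monom (1::'a::zero_neq_one) m) = 1"
proof -
  have "{i. coeff (monom (1::'a) m) i \<noteq> 0} = {m}" by (auto simp: coeff_monom)
  thus ?thesis by (simp add: num_terms_def)
qed

lemma num_terms_const: "num_terms [:c:] \<le> 1"
proof -
  have "{i. coeff [:c:] i \<noteq> 0} \<subseteq> {0}"
  proof
    fix i assume "i \<in> {i. coeff [:c:] i \<noteq> 0}" thus "i \<in> {0}" by (cases i) auto
  qed
  hence "card {i. coeff [:c:] i \<noteq> 0} \<le> card {0::nat}" by (intro card_mono) auto
  thus ?thesis by (simp add: num_terms_def)
qed

lemma comp_lin_left: "pcompose [:x,y:] G = [:x:] + smult y G"
  by (simp add: pcompose_pCons)

lemma normalize_lin: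
  fixes g :: "'a::field"
  assumes "g \<noteq> 0"
  shows "pcompose [:-g0/g, 1/g:] ([:g0:] + monom g m) = monom 1 m"
  using assms by (simp add: comp_lin_left smult_add_right smult_monom)

lemma lc_nz: "degree p = d \<Longrightarrow> d > 0 \<Longrightarrow> coeff p d \<noteq> 0"
  by (metis degree_0 leading_coeff_0_iff less_irrefl)

lemma comp_cancel:
  fixes F :: "'a::field poly"
  assumes "degree F > 0" "pcompose a F = pcompose a' F"
  shows "a = a'"
proof -
  have "pcompose (a - a') F = 0" using assms(2) by (simp add: pcompose_diff)
  hence "a - a' = 0" using pcompose_eq_0[OF _ assms(1)] by blast
  thus ?thesis by simp
qed

lemma deg1_form:
  assumes "degree b = 1"
  shows "b = [:coeff b 0, coeff b 1:]"
proof (rule poly_eqI)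
  fix i show "coeff b i = coeff [:coeff b 0, coeff b 1:] i"
  proof (cases i)
    case (Suc j) thus ?thesis using assms by (cases j) (auto simp: coeff_eq_0)
  qed simp
qed

lemma deg0_form:
  assumes "degree b = 0"
  shows "b = [:coeff b 0:]"
proof (rule poly_eqI)
  fix i show "coeff b i = coeff [:coeff b 0:] i"
    using assms by (cases i) (auto simp: coeff_eq_0)
qed

theorem lemma4p1:
  fixes F :: "'a::field_char_0 poly"
  assumes "\<And>u v. degree u = 1 \<Longrightarrow> degree v = 1 \<Longrightarrow>
             num_terms (pcompose u (pcompose F v)) \<ge> 2"
  shows "finite {(a, b). degree a = 1 \<and> degree b = 1 \<and> pcompose F b = pcompose a F}"
proof -
  define n where "n = degree F"
  have id1: "degree [:0, 1::'a:] = 1" by simp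
  have n2: "n \<ge> 2"
  proof (rule ccontr)
    assume "\<not> n \<ge> 2"
    hence "n = 0 \<or> n = 1" by auto
    thus False
    proof
      assume "n = 0"
      hence "F = [:coeff F 0:]" using deg0_form[of F] n_def by simp
      moreover have "pcompose [:0,1:] (pcompose F [:0,1:]) = F" by (simp add: comp_lin_left)
      ultimately show False using assms[OF id1 id1] num_terms_const[of "coeff F 0"] by simp
    next
      assume n1: "n = 1"
      define g0 g where "g0 = coeff F 0" and "g = coeff F 1"
      have "g \<noteq> 0" using n1 n_def g_def lc_nz[of F 1] by simp
      have "F = [:g0:] + monom g 1"
        using deg1_form[of F] n1 n_def g0_def g_def by (simp add: monom_altdef)
      hence "pcompose [:-g0/g, 1/g:] (pcompose F [:0,1:]) = monom 1 1"
        using normalize_lin[OF \<open>g \<noteq> 0\<close>] by simp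
      moreover have "degree [:-g0/g, 1/g:] = 1" using \<open>g \<noteq> 0\<close> by simp
      ultimately show False using assms[OF _ id1, of "[:-g0/g, 1/g:]"] num_terms_monom[where 'a='a, of 1] by simp
    qed
  qed
  define fn where "fn = coeff F n"
  have fn0: "fn \<noteq> 0" using n2 n_def fn_def lc_nz[of F n] by simp
  define c where "c = coeff F (n-1) / (of_nat n * fn)"
  define G where "G = pcompose F [:-c,1:]"
  have degG: "degree G = n" unfolding G_def n_def by (simp add: degree_pcompose)
  have lcG: "coeff G n = fn"
    using lead_coeff_comp[of "[:-c,1:]" F] degG unfolding G_def fn_def n_def by simp
  have cG1: "coeff G (n-1) = 0"
  proof -
    have "coeff G (n-1) = coeff F (n-1) + of_nat n * fn * (-c)"
      unfolding G_def fn_def using coeff_top1[of F n "-c" 1] n_def n2 by simp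
    also have "\<dots> = 0" unfolding c_def using fn0 n2 by (simp add: field_simps)
    finally show ?thesis .
  qed
  have FG: "F = pcompose G [:c,1:]"
  proof -
    have "pcompose G [:c,1:] = pcompose F (pcompose [:-c,1:] [:c,1:])"
      unfolding G_def by (simp add: pcompose_assoc)
    also have "pcompose [:-c,1:] [:c,1:] = [:0,1:]" by (simp add: comp_lin_left)
    finally show ?thesis by simp
  qed
  obtain k where k: "1 \<le> k" "k < n - 1" "coeff G k \<noteq> 0"
  proof (rule ccontr)
    assume "\<not> thesis"
    with that have hk: "\<And>k. 1 \<le> k \<Longrightarrow> k < n - 1 \<Longrightarrow> coeff G k = 0" by blast
    have "G = [:coeff G 0:] + monom fn n"
    proof (rule poly_eqI)
      fix i
      show "coeff G i = coeff ([:coeff G 0:] + monom fn n) i"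
      proof -
        consider "i = 0" | "1 \<le> i \<and> i < n - 1" | "i = n - 1" | "i = n" | "i > n" by linarith
        thus ?thesis
        proof cases
          case 1 thus ?thesis using n2 by (simp add: coeff_monom)
        next
          case 2 thus ?thesis using hk[of i] n2 by (auto simp: coeff_monom coeff_pCons split: nat.splits)
        next
          case 3 thus ?thesis using cG1 n2 by (auto simp: coeff_monom coeff_pCons split: nat.splits)
        next
          case 4 thus ?thesis using lcG n2 by (auto simp: coeff_monom coeff_pCons split: nat.splits)
        next
          case 5 thus ?thesis using degG by (auto simp: coeff_monom coeff_pCons coeff_eq_0 split: nat.splits)
        qed
      qed
    qed
    moreover define g0 where "g0 = coeff G 0"
    ultimately have Gf: "G = [:g0:] + monom fn n" by simp
    have "pcompose [:-g0/fn, 1/fn:] G = monom 1 n"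
      unfolding Gf by (rule normalize_lin[OF fn0])
    hence "pcompose [:-g0/fn, 1/fn:] (pcompose F [:-c,1:]) = monom 1 n"
      unfolding G_def .
    moreover have "degree [:-g0/fn, 1/fn:] = 1" using fn0 by simp
    moreover have "degree [:-c, 1:] = 1" by simp
    ultimately show False using assms[of "[:-g0/fn, 1/fn:]" "[:-c,1:]"] num_terms_monom[where 'a='a, of n] by simp
  qed
  define m where "m = n - k"
  have m0: "m > 0" using k unfolding m_def by simp
  define R where "R = {t::'a. t ^ m = 1}"
  define B where "B = (\<lambda>t::'a. [:t*c - c, t:])"
  define S where "S = {(a, b). degree a = 1 \<and> degree b = 1 \<and> pcompose F b = pcompose a F}"
  have finR: "finite R"
  proof -
    have ne: "monom (1::'a) m - 1 \<noteq> 0"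
    proof
      assume "monom (1::'a) m - 1 = 0"
      hence "coeff (monom (1::'a) m - 1) m = 0" by simp
      thus False using m0 by simp
    qed
    have "R \<subseteq> {t. poly (monom 1 m - 1) t = 0}" unfolding R_def by (auto simp: poly_monom)
    thus ?thesis using poly_roots_finite[OF ne] finite_subset by blast
  qed
  have key: "b \<in> B ` R" if "(a, b) \<in> S" for a b
  proof -
    from that have da: "degree a = 1" and db: "degree b = 1" and eq: "pcompose F b = pcompose a F"
      unfolding S_def by auto
    define a0 a1 b0 b1 where "a0 = coeff a 0" and "a1 = coeff a 1" and "b0 = coeff b 0" and "b1 = coeff b 1"
    have a_eq: "a = [:a0, a1:]" using deg1_form[OF da] a0_def a1_def by simp
    have b_eq: "b = [:b0, b1:]" using deg1_form[OF db] b0_def b1_def by simp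
    have b10: "b1 \<noteq> 0" using db b1_def lc_nz[of b 1] by simp
    define h0 where "h0 = c + b0 - b1 * c"
    define h where "h = [:h0, b1:]"
    have h_eq: "h = pcompose [:c,1:] (pcompose b [:-c,1:])"
      unfolding h_def h0_def b_eq by (simp add: comp_lin_left algebra_simps)
    have Gh: "pcompose G h = pcompose a G"
    proof -
      have "pcompose G h = pcompose (pcompose (pcompose G [:c,1:]) b) [:-c,1:]"
        unfolding h_eq by (simp add: pcompose_assoc)
      also have "\<dots> = pcompose (pcompose a F) [:-c,1:]" using eq FG by simp
      also have "\<dots> = pcompose a G" unfolding G_def by (simp add: pcompose_assoc)
      finally show ?thesis .
    qed
    have caG: "coeff (pcompose a G) i = (if i = 0 then a0 else 0) + a1 * coeff G i" for i
      unfolding a_eq comp_lin_left by (cases i) auto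
    have dh: "degree h = 1" unfolding h_def using b10 by simp
    have "coeff (pcompose G h) n = fn * b1 ^ n"
      using lead_coeff_comp[of h G] dh degG lcG degree_pcompose[of G h] unfolding h_def by simp
    hence "fn * b1 ^ n = a1 * fn" using Gh caG[of n] n2 lcG by auto
    hence a1e: "a1 = b1 ^ n" using fn0 by simp
    have "coeff (pcompose G h) (n-1) = of_nat n * fn * b1^(n-1) * h0"
      using coeff_top1[of G n h0 b1] degG n2 cG1 lcG unfolding h_def by simp
    moreover have "coeff (pcompose a G) (n-1) = 0" using caG[of "n-1"] cG1 n2 by simp
    ultimately have "of_nat n * fn * b1^(n-1) * h0 = 0" using Gh by simp
    hence h00: "h0 = 0" using fn0 b10 n2 by simp
    have "coeff (pcompose G h) k = b1 ^ k * coeff G k"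
      unfolding h_def h00 by (rule coeff_pcompose_linear)
    moreover have "coeff (pcompose a G) k = b1 ^ n * coeff G k" using caG[of k] k a1e by simp
    ultimately have "b1 ^ k = b1 ^ n" using Gh k by simp
    moreover have "b1 ^ n = b1 ^ k * b1 ^ m" unfolding m_def using k by (simp flip: power_add)
    ultimately have "b1 ^ m = 1" using b10 by simp
    moreover have "b = B b1" unfolding B_def b_eq using h00 unfolding h0_def by (simp add: algebra_simps)
    ultimately show ?thesis unfolding R_def by blast
  qed
  have "snd ` S \<subseteq> B ` R" using key by auto
  hence fin1: "finite (snd ` S)" using finR finite_subset by blast
  have "inj_on snd S"
  proof (rule inj_onI)
    fix x y assume "x \<in> S" "y \<in> S" "snd x = snd y"
    then obtain a b a' where "x = (a, b)" "y = (a', b)" by (metis prod.collapse)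
    with \<open>x \<in> S\<close> \<open>y \<in> S\<close> have "pcompose a F = pcompose a' F" unfolding S_def by auto
    hence "a = a'" using comp_cancel n2 n_def by (metis gr0I not_numeral_le_zero)
    thus "x = y" using \<open>x = (a, b)\<close> \<open>y = (a', b)\<close> by simp
  qed
  thus ?thesis using fin1 finite_imageD unfolding S_def by blast
qed

end
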